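(* Let $G$ be an abelian Hausdorff topological group, $A\subseteq G\setminus\{0\}$, and let $K_A:S_A\to G$ be the associated Kalton map. (i) If $A$ is topologically independent in $G$, then $K_A$ is an open map onto $\langle A\rangle$ (i.e. $K_A:S_A\to\langle A\rangle$ is open, where $\langle A\rangle$ carries the subspace topology). (ii) If $K_A$ is a topologically isomorphic embedding, then $A$ is topologically independent in $G$.
   Context: For $a\in G$, $\langle a\rangle$ is the cyclic subgroup generated by $a$ with the subspace topology, and $\langle A\rangle$ is the subgroup generated by $A$. $S_A=\bigoplus_{a\in A}\langle a\rangle$ is the subgroup of finitely supported elements of $\prod_{a\in A}\langle a\rangle$, with the subspace topology of the Tychonoff product topology. The Kalton map $K_A:S_A\to G$ is the unique homomorphism extending each inclusion $\langle a\rangle\to G$. $A$ is topologically independent if $0\notin A$ and for every neighbourhood $W$ of $0$ there is a neighbourhood $U$ of $0$ such that for every finite $F\subseteq A$ and all integers $\{z_a:a\in F\}$, $\sum_{a\in F}z_aa\in U$ implies $z_aa\in W$ for all $a\in F$. *)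

theory Defs
  imports "HOL-Analysis.Analysis"
begin

definition nmult :: "nat \<Rightarrow> 'a::ab_group_add \<Rightarrow> 'a" where
  "nmult n a = (\<Sum>i<n. a)"

definition zmult :: "int \<Rightarrow> 'a::ab_group_add \<Rightarrow> 'a" where
  "zmult k a = (if 0 \<le> k then nmult (nat k) a else - nmult (nat (- k)) a)"

definition is_subgroup :: "'a::ab_group_add set \<Rightarrow> bool" where
  "is_subgroup H \<longleftrightarrow> 0 \<in> H \<and> (\<forall>x\<in>H. \<forall>y\<in>H. x - y \<in> H)"

definition gen_subgroup :: "'a::ab_group_add set \<Rightarrow> 'a set" where
  "gen_subgroup A = is_subgroup hull A"

definition cyclic_subgroup :: "'a::ab_group_add \<Rightarrow> 'a set" where
  "cyclic_subgroup a = gen_subgroup {a}"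

definition nhd0 :: "'a::{zero,topological_space} set \<Rightarrow> bool" where
  "nhd0 W \<longleftrightarrow> (\<exists>V. open V \<and> 0 \<in> V \<and> V \<subseteq> W)"

definition SA_carrier :: "'a::{ab_group_add,topological_space} set \<Rightarrow> ('a \<Rightarrow> 'a) set" where
  "SA_carrier A = {f \<in> (\<Pi>\<^sub>E a\<in>A. cyclic_subgroup a). finite {a \<in> A. f a \<noteq> 0}}"

definition SA_top :: "'a::{ab_group_add,topological_space} set \<Rightarrow> ('a \<Rightarrow> 'a) topology" where
  "SA_top A = subtopology (product_topology (\<lambda>a. subtopology euclidean (cyclic_subgroup a)) A)
                          (SA_carrier A)"

definition kalton :: "'a::ab_group_add set \<Rightarrow> ('a \<Rightarrow> 'a) \<Rightarrow> 'a" where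
  "kalton A f = (\<Sum>a\<in>{a \<in> A. f a \<noteq> 0}. f a)"

definition top_independent :: "'a::{ab_group_add,topological_space} set \<Rightarrow> bool" where
  "top_independent A \<longleftrightarrow> 0 \<notin> A \<and>
     (\<forall>W. nhd0 W \<longrightarrow> (\<exists>U. nhd0 U \<and>
        (\<forall>F z. finite F \<and> F \<subseteq> A \<longrightarrow>
           (\<Sum>a\<in>F. zmult (z a) a) \<in> U \<longrightarrow> (\<forall>a\<in>F. zmult (z a) a \<in> W))))"

end

theory Submission
  imports Defs
begin


lemma nmult_0[simp]: "nmult 0 a = 0" by (simp add: nmult_def)
lemma nmult_Suc: "nmult (Suc n) a = nmult n a + a" by (simp add: nmult_def)

lemma zmult_0[simp]: "zmult 0 a = 0" by (simp add: zmult_def)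

lemma zmult_add1: "zmult (k+1) a = zmult k a + a"
proof (cases "k \<ge> 0")
  case True
  then have "nat (k+1) = Suc (nat k)" by simp
  then show ?thesis using True by (simp add: zmult_def nmult_Suc)
next
  case False
  show ?thesis
  proof (cases "k = -1")
    case True then show ?thesis by (simp add: zmult_def nmult_def)
  next
    case F2: False
    with False have "nat (-k) = Suc (nat (-(k+1)))" by simp
    then show ?thesis using False F2 by (simp add: zmult_def nmult_Suc)
  qed
qed

lemma zmult_sub1: "zmult (k-1) a = zmult k a - a"
  using zmult_add1[of "k-1" a] by (simp add: algebra_simps)

lemma zmult_add: "zmult (k + l) a = zmult k a + zmult l a"
proof (induction l rule: int_induct[where k=0])
  case base then show ?case by simp
next
  case (step1 i)
  have "zmult (k + (i+1)) a = zmult ((k+i)+1) a" by (simp add: algebra_simps)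
  also have "\<dots> = zmult (k+i) a + a" by (rule zmult_add1)
  also have "\<dots> = zmult k a + zmult (i+1) a" by (simp only: step1 zmult_add1 add.assoc)
  finally show ?case .
next
  case (step2 i)
  have "zmult (k + (i-1)) a = zmult ((k+i)-1) a" by (simp add: algebra_simps)
  also have "\<dots> = zmult (k+i) a - a" by (rule zmult_sub1)
  also have "\<dots> = zmult k a + zmult (i-1) a" by (simp only: step2 zmult_sub1 add_diff_eq)
  finally show ?case .
qed

lemma zmult_diff: "zmult k a - zmult l a = zmult (k - l) a"
proof -
  have "zmult (k - l) a + zmult l a = zmult k a" using zmult_add[of "k-l" l a] by simp
  then show ?thesis by (simp add: algebra_simps)
qed

lemma is_subgroup_hull: "is_subgroup (is_subgroup hull S)"
  by (rule hull_in) (auto simp: is_subgroup_def)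

lemma is_subgroup_add: "is_subgroup H \<Longrightarrow> x \<in> H \<Longrightarrow> y \<in> H \<Longrightarrow> x + y \<in> H"
proof -
  assume H: "is_subgroup H" and x: "x \<in> H" and y: "y \<in> H"
  have "0 - y \<in> H" using H y unfolding is_subgroup_def by blast
  then have "x - (0 - y) \<in> H" using H x unfolding is_subgroup_def by blast
  then show "x + y \<in> H" by simp
qed

lemma is_subgroup_sum: "is_subgroup H \<Longrightarrow> (\<And>x. x \<in> F \<Longrightarrow> f x \<in> H) \<Longrightarrow> sum f F \<in> H"
proof (induction F rule: infinite_finite_induct)
  case (infinite F) then show ?case by (simp add: is_subgroup_def)
next
  case empty then show ?case by (simp add: is_subgroup_def)
next
  case (insert x F)
  then have "f x \<in> H" "sum f F \<in> H" by auto
  then show ?case using insert(1,2) is_subgroup_add[OF insert(4)] by simp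
qed

lemma cyclic_iff: "x \<in> cyclic_subgroup a \<longleftrightarrow> (\<exists>k. x = zmult k a)"
proof
  assume "x \<in> cyclic_subgroup a"
  moreover have "cyclic_subgroup a \<subseteq> range (\<lambda>k. zmult k a)"
    unfolding cyclic_subgroup_def gen_subgroup_def
  proof (rule hull_minimal)
    have "a = zmult 1 a" using zmult_add1[of 0 a] by simp
    then show "{a} \<subseteq> range (\<lambda>k. zmult k a)" by auto
    show "is_subgroup (range (\<lambda>k. zmult k a))"
      unfolding is_subgroup_def
    proof (intro conjI ballI)
      show "0 \<in> range (\<lambda>k. zmult k a)" using zmult_0[of a] by (metis rangeI)
      fix x y assume "x \<in> range (\<lambda>k. zmult k a)" "y \<in> range (\<lambda>k. zmult k a)"
      then obtain k l where "x = zmult k a" "y = zmult l a" by blast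
      then have "x - y = zmult (k - l) a" by (simp add: zmult_diff)
      then show "x - y \<in> range (\<lambda>k. zmult k a)" by blast
    qed
  qed
  ultimately show "\<exists>k. x = zmult k a" by auto
next
  assume "\<exists>k. x = zmult k a"
  then obtain k where k: "x = zmult k a" by auto
  have H: "is_subgroup (cyclic_subgroup a)" unfolding cyclic_subgroup_def gen_subgroup_def
    by (rule is_subgroup_hull)
  have aH: "a \<in> cyclic_subgroup a" unfolding cyclic_subgroup_def gen_subgroup_def
    by (rule hull_inc) simp
  have "zmult k a \<in> cyclic_subgroup a"
  proof (induction k rule: int_induct[where k=0])
    case base then show ?case using H by (simp add: is_subgroup_def)
  next
    case (step1 i) then show ?case using H aH by (simp add: zmult_add1 is_subgroup_add)
  next
    case (step2 i) then show ?case using H aH by (simp add: zmult_sub1 is_subgroup_def)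
  qed
  then show "x \<in> cyclic_subgroup a" using k by simp
qed



lemma cyc_sub: "is_subgroup (cyclic_subgroup a)"
  unfolding cyclic_subgroup_def gen_subgroup_def by (rule is_subgroup_hull)

lemma cyc_0: "0 \<in> cyclic_subgroup a" using cyc_sub[of a] unfolding is_subgroup_def by blast

lemma topspace_SA: "topspace (SA_top A) = SA_carrier A"
  unfolding SA_top_def by (auto simp: topspace_product_topology SA_carrier_def)

lemma kalton_eq: "finite F \<Longrightarrow> F \<subseteq> A \<Longrightarrow> {a\<in>A. f a \<noteq> 0} \<subseteq> F \<Longrightarrow> kalton A f = sum f F"
  unfolding kalton_def by (rule sum.mono_neutral_left) auto

lemma SA_diff:
  assumes f: "f \<in> SA_carrier A" and g: "g \<in> SA_carrier A"
  shows "restrict (\<lambda>a. f a - g a) A \<in> SA_carrier A \<and>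
         kalton A (restrict (\<lambda>a. f a - g a) A) = kalton A f - kalton A g"
proof -
  let ?F = "{a\<in>A. f a \<noteq> 0} \<union> {a\<in>A. g a \<noteq> 0}"
  have fin: "finite ?F" using f g by (auto simp: SA_carrier_def)
  have "f a - g a \<in> cyclic_subgroup a" if "a \<in> A" for a
    using f g that cyc_sub[of a] unfolding SA_carrier_def is_subgroup_def by (auto simp: PiE_iff)
  then have "restrict (\<lambda>a. f a - g a) A \<in> SA_carrier A"
    unfolding SA_carrier_def
    by (auto intro: finite_subset[OF _ fin])
  moreover have "kalton A (restrict (\<lambda>a. f a - g a) A) = sum (restrict (\<lambda>a. f a - g a) A) ?F"
    by (rule kalton_eq[OF fin]) auto
  moreover have "\<dots> = sum (\<lambda>a. f a - g a) ?F" by (rule sum.cong) auto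
  moreover have "\<dots> = sum f ?F - sum g ?F" by (simp add: sum_subtractf)
  moreover have "kalton A f = sum f ?F" by (rule kalton_eq[OF fin]) auto
  moreover have "kalton A g = sum g ?F" by (rule kalton_eq[OF fin]) auto
  ultimately show ?thesis by simp
qed

lemma SA_single:
  assumes "x \<in> cyclic_subgroup a" "a \<in> A"
  shows "restrict (\<lambda>c. if c = a then x else 0) A \<in> SA_carrier A \<and>
         kalton A (restrict (\<lambda>c. if c = a then x else 0) A) = x"
proof -
  have s: "{c\<in>A. restrict (\<lambda>c. if c = a then x else 0) A c \<noteq> 0} \<subseteq> {a}" by auto
  have "restrict (\<lambda>c. if c = a then x else 0) A \<in> (\<Pi>\<^sub>E c\<in>A. cyclic_subgroup c)"
    using assms(1) by (simp add: PiE_iff cyc_0)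
  then have "restrict (\<lambda>c. if c = a then x else 0) A \<in> SA_carrier A"
    unfolding SA_carrier_def using finite_subset[OF s] by simp
  moreover have "kalton A (restrict (\<lambda>c. if c = a then x else 0) A) =
     sum (restrict (\<lambda>c. if c = a then x else 0) A) {a}"
    by (rule kalton_eq) (use assms in auto)
  ultimately show ?thesis using assms by simp
qed

lemma SA_zero: "restrict (\<lambda>c. 0) A \<in> SA_carrier A \<and> kalton A (restrict (\<lambda>c. 0) A) = 0"
proof
  have "restrict (\<lambda>c. 0) A \<in> (\<Pi>\<^sub>E c\<in>A. cyclic_subgroup c)" by (simp add: PiE_iff cyc_0)
  moreover have "{c\<in>A. restrict (\<lambda>c. 0) A c \<noteq> 0} = {}" by simp
  ultimately show "restrict (\<lambda>c. 0) A \<in> SA_carrier A" unfolding SA_carrier_def by simp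
  show "kalton A (restrict (\<lambda>c. 0) A) = 0" unfolding kalton_def by simp
qed

lemma SA_box:
  assumes N: "openin (SA_top A) N" and fN: "f \<in> N"
  shows "\<exists>P. (\<forall>a\<in>A. open (P a) \<and> f a \<in> P a) \<and> finite {a\<in>A. P a \<noteq> UNIV} \<and>
             (\<forall>g\<in>SA_carrier A. (\<forall>a\<in>A. g a \<in> P a) \<longrightarrow> g \<in> N)"
proof -
  let ?X = "\<lambda>a. subtopology euclidean (cyclic_subgroup a)"
  obtain T where T: "openin (product_topology ?X A) T" "N = T \<inter> SA_carrier A"
    using N unfolding SA_top_def openin_subtopology by auto
  with fN have "f \<in> T" by auto
  then obtain U where U: "finite {i \<in> A. U i \<noteq> topspace (?X i)}" "\<forall>i\<in>A. openin (?X i) (U i)"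
      "f \<in> Pi\<^sub>E A U" "Pi\<^sub>E A U \<subseteq> T"
    using T(1) unfolding openin_product_topology_alt by blast
  have ex: "\<exists>Q. open Q \<and> U i = cyclic_subgroup i \<inter> Q" if "i \<in> A" for i
    using U(2) that unfolding openin_subtopology by (auto simp: Int_commute)
  define P where "P i = (if U i = cyclic_subgroup i then UNIV
                         else (SOME Q. open Q \<and> U i = cyclic_subgroup i \<inter> Q))" for i
  have P: "open (P i) \<and> U i = cyclic_subgroup i \<inter> P i" if "i \<in> A" for i
    using someI_ex[OF ex[OF that]] by (auto simp: P_def)
  have "{a\<in>A. P a \<noteq> UNIV} \<subseteq> {i \<in> A. U i \<noteq> topspace (?X i)}" by (auto simp: P_def)
  then have "finite {a\<in>A. P a \<noteq> UNIV}" using U(1) by (rule finite_subset)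
  moreover have "\<forall>a\<in>A. open (P a) \<and> f a \<in> P a" using P U(3) by (auto simp: PiE_def)
  moreover have "\<forall>g\<in>SA_carrier A. (\<forall>a\<in>A. g a \<in> P a) \<longrightarrow> g \<in> N"
  proof (intro ballI impI)
    fix g assume g: "g \<in> SA_carrier A" "\<forall>a\<in>A. g a \<in> P a"
    then have "g \<in> Pi\<^sub>E A U" using P by (auto simp: SA_carrier_def PiE_def)
    then show "g \<in> N" using U(4) T(2) g(1) by auto
  qed
  ultimately show ?thesis by blast
qed



lemma image_eq:
  fixes A :: "'a::{topological_ab_group_add, t2_space} set"
  shows "kalton A ` SA_carrier A = gen_subgroup A"
proof
  show "kalton A ` SA_carrier A \<subseteq> gen_subgroup A"
  proof
    fix y assume "y \<in> kalton A ` SA_carrier A"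
    then obtain h where h: "h \<in> SA_carrier A" "y = kalton A h" by auto
    have Hs: "is_subgroup (gen_subgroup A)" unfolding gen_subgroup_def by (rule is_subgroup_hull)
    have ha: "h a \<in> gen_subgroup A" if "a \<in> A" "h a \<noteq> 0" for a
    proof -
      have "h a \<in> cyclic_subgroup a" using h that by (auto simp: SA_carrier_def PiE_iff)
      moreover have "cyclic_subgroup a \<subseteq> gen_subgroup A"
        unfolding cyclic_subgroup_def gen_subgroup_def
        by (rule hull_mono) (use that in auto)
      ultimately show ?thesis by auto
    qed
    show "y \<in> gen_subgroup A" unfolding h kalton_def
      by (rule is_subgroup_sum[OF Hs]) (rule ha; simp)
  qed
  show "gen_subgroup A \<subseteq> kalton A ` SA_carrier A"
    unfolding gen_subgroup_def
  proof (rule hull_minimal)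
    show "A \<subseteq> kalton A ` SA_carrier A"
    proof
      fix a assume a: "a \<in> A"
      have "a \<in> cyclic_subgroup a" unfolding cyclic_subgroup_def gen_subgroup_def
        by (rule hull_inc) simp
      from SA_single[OF this a] show "a \<in> kalton A ` SA_carrier A" by (metis (no_types, lifting) image_eqI)
    qed
    show "is_subgroup (kalton A ` SA_carrier A)"
      unfolding is_subgroup_def
    proof (intro conjI ballI)
      show "0 \<in> kalton A ` SA_carrier A" using SA_zero[of A] by (metis (no_types, lifting) image_eqI)
      fix x y assume "x \<in> kalton A ` SA_carrier A" "y \<in> kalton A ` SA_carrier A"
      then obtain f g where "f \<in> SA_carrier A" "g \<in> SA_carrier A" "x = kalton A f" "y = kalton A g"
        by auto
      note fg = this
      define d where "d = restrict (\<lambda>a. f a - g a) A"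
      have d1: "d \<in> SA_carrier A" and d2: "x - y = kalton A d"
        using SA_diff[of f A g] fg unfolding d_def by auto
      show "x - y \<in> kalton A ` SA_carrier A" using d2 d1 by (rule image_eqI)
    qed
  qed
qed

lemma part1:
  fixes A :: "'a::{topological_ab_group_add, t2_space} set"
  assumes ind: "top_independent A"
  shows "open_map (SA_top A) (subtopology euclidean (gen_subgroup A)) (kalton A)"
  unfolding open_map_def
proof (intro allI impI)
  fix N assume N: "openin (SA_top A) N"
  have NS: "N \<subseteq> SA_carrier A" using openin_subset[OF N] topspace_SA by auto
  let ?H = "gen_subgroup A"
  let ?K = "kalton A"
  show "openin (top_of_set ?H) (?K ` N)"
    unfolding openin_subopen[of _ "?K ` N"]
  proof
    fix x assume "x \<in> ?K ` N"
    then obtain f where f: "f \<in> N" "x = ?K f" by auto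
    have fS: "f \<in> SA_carrier A" using f NS by auto
    obtain P where P: "\<forall>a\<in>A. open (P a) \<and> f a \<in> P a" "finite {a\<in>A. P a \<noteq> UNIV}"
       "\<forall>g\<in>SA_carrier A. (\<forall>a\<in>A. g a \<in> P a) \<longrightarrow> g \<in> N"
      using SA_box[OF N f(1)] by blast
    define W where "W = {y. \<forall>a\<in>A. y + f a \<in> P a}"
    have "W = (\<Inter>a\<in>{a\<in>A. P a \<noteq> UNIV}. (\<lambda>y. y + f a) -` P a)"
      unfolding W_def by auto
    moreover have "open ((\<lambda>y. y + f a) -` P a)" if "a \<in> A" for a
      by (rule open_vimage) (use P(1) that in \<open>auto intro!: continuous_intros\<close>)
    ultimately have "open W" using P(2) by (auto intro!: open_INT)
    moreover have "0 \<in> W" using P(1) by (auto simp: W_def)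
    ultimately have "nhd0 W" unfolding nhd0_def by blast
    then obtain U where U: "nhd0 U" "\<forall>F z. finite F \<and> F \<subseteq> A \<longrightarrow>
           (\<Sum>a\<in>F. zmult (z a) a) \<in> U \<longrightarrow> (\<forall>a\<in>F. zmult (z a) a \<in> W)"
      using ind unfolding top_independent_def by blast
    obtain V where V: "open V" "0 \<in> V" "V \<subseteq> U" using U(1) unfolding nhd0_def by blast
    define T where "T = ?H \<inter> (\<lambda>y. y - ?K f) -` V"
    have "openin (top_of_set ?H) T" unfolding T_def
      by (rule openin_open_Int, rule open_vimage) (use V in \<open>auto intro!: continuous_intros\<close>)
    moreover have "x \<in> T" unfolding T_def using f fS V image_eq[of A] by auto
    moreover have "T \<subseteq> ?K ` N"
    proof
      fix y assume y: "y \<in> T"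
      then obtain h where h: "h \<in> SA_carrier A" "y = ?K h" unfolding T_def using image_eq[of A]
        by auto
      define g where "g = restrict (\<lambda>a. h a - f a) A"
      have gS: "g \<in> SA_carrier A" and Kg: "?K g = ?K h - ?K f"
        using SA_diff[OF h(1) fS] unfolding g_def by auto
      define F where "F = {a\<in>A. g a \<noteq> 0}"
      have finF: "finite F" "F \<subseteq> A" using gS by (auto simp: F_def SA_carrier_def)
      have "\<forall>a\<in>A. \<exists>k. g a = zmult k a" using gS by (auto simp: SA_carrier_def PiE_iff cyclic_iff)
      then obtain z where z: "\<forall>a\<in>A. g a = zmult (z a) a" by metis
      have "(\<Sum>a\<in>F. zmult (z a) a) = sum g F" using z finF(2) by (intro sum.cong refl) (metis subsetD)
      also have "\<dots> = ?K g" unfolding kalton_def F_def ..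
      finally have "(\<Sum>a\<in>F. zmult (z a) a) \<in> U" using Kg h y V unfolding T_def by auto
      then have "\<forall>a\<in>F. zmult (z a) a \<in> W" using U(2) finF by blast
      then have gW: "\<forall>a\<in>A. g a \<in> W" using z \<open>0 \<in> W\<close> by (auto simp: F_def)
      have "\<forall>a\<in>A. h a \<in> P a"
      proof
        fix a assume a: "a \<in> A"
        then have "g a + f a \<in> P a" using gW by (auto simp: W_def)
        then show "h a \<in> P a" using a by (simp add: g_def)
      qed
      then have "h \<in> N" using P(3) h(1) by blast
      then show "y \<in> ?K ` N" using h by auto
    qed
    ultimately show "\<exists>T. openin (top_of_set ?H) T \<and> x \<in> T \<and> T \<subseteq> ?K ` N" by blast
  qed
qed



lemma part2:
  fixes A :: "'a::{topological_ab_group_add, t2_space} set"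
  assumes A0: "0 \<notin> A" and emb: "embedding_map (SA_top A) euclidean (kalton A)"
  shows "top_independent A"
  unfolding top_independent_def
proof (intro conjI allI impI)
  show "0 \<notin> A" by fact
  let ?K = "kalton A"
  let ?S = "SA_carrier A"
  have hom: "homeomorphic_map (SA_top A) (top_of_set (?K ` ?S)) ?K"
    using emb unfolding embedding_map_def topspace_SA .
  have om: "open_map (SA_top A) (top_of_set (?K ` ?S)) ?K"
    by (rule homeomorphic_imp_open_map[OF hom])
  have "inj_on ?K (topspace (SA_top A))" by (rule homeomorphic_imp_injective_map[OF hom])
  then have inj: "inj_on ?K ?S" by (simp only: topspace_SA)
  have cm: "continuous_map (SA_top A) euclidean ?K"
    using homeomorphic_imp_continuous_map[OF hom] unfolding continuous_map_in_subtopology by (rule conjunct1)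
  fix W :: "'a set" assume "nhd0 W"
  then obtain V where V: "open V" "0 \<in> V" "V \<subseteq> W" unfolding nhd0_def by blast
  have NV: "openin (SA_top A) {x \<in> topspace (SA_top A). ?K x \<in> V}"
    by (rule openin_continuous_map_preimage[OF cm]) (use V in simp)
  define z0 where "z0 = restrict (\<lambda>c. (0::'a)) A"
  have z0: "z0 \<in> ?S" "?K z0 = 0" using SA_zero[of A] unfolding z0_def by auto
  have "z0 \<in> {x \<in> topspace (SA_top A). ?K x \<in> V}" using z0 V topspace_SA by auto
  from SA_box[OF NV this] obtain P where P: "\<forall>a\<in>A. open (P a) \<and> z0 a \<in> P a"
    "finite {a\<in>A. P a \<noteq> UNIV}"
    "\<forall>g\<in>?S. (\<forall>a\<in>A. g a \<in> P a) \<longrightarrow> g \<in> {x \<in> topspace (SA_top A). ?K x \<in> V}"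
    by blast
  have P0: "0 \<in> P a" if "a \<in> A" for a using P(1) that unfolding z0_def by auto
  define B where "B = {g \<in> ?S. \<forall>a\<in>A. g a \<in> P a}"
  have BV: "\<And>g. g \<in> B \<Longrightarrow> ?K g \<in> V" using P(3) unfolding B_def by auto
  let ?X = "\<lambda>a. subtopology euclidean (cyclic_subgroup a)"
  have "openin (product_topology ?X A) (\<Pi>\<^sub>E a\<in>A. cyclic_subgroup a \<inter> P a)"
    unfolding openin_PiE_gen
  proof (rule disjI2, rule conjI)
    have "{i \<in> A. cyclic_subgroup i \<inter> P i \<noteq> topspace (?X i)} \<subseteq> {a\<in>A. P a \<noteq> UNIV}" by auto
    then show "finite {i \<in> A. cyclic_subgroup i \<inter> P i \<noteq> topspace (?X i)}"
      using P(2) by (rule finite_subset)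
    show "\<forall>i\<in>A. openin (?X i) (cyclic_subgroup i \<inter> P i)"
      using P(1) by (auto intro: openin_open_Int)
  qed
  moreover have "B = (\<Pi>\<^sub>E a\<in>A. cyclic_subgroup a \<inter> P a) \<inter> ?S"
    unfolding B_def by (auto simp: SA_carrier_def PiE_iff extensional_def)
  ultimately have "openin (SA_top A) B"
    unfolding SA_top_def openin_subtopology by blast
  then have "openin (top_of_set (?K ` ?S)) (?K ` B)" using om unfolding open_map_def by blast
  then obtain U where U0: "openin euclidean U" "?K ` B = U \<inter> ?K ` ?S" unfolding openin_subtopology
    by blast
  have U: "open U" "?K ` B = U \<inter> ?K ` ?S" using U0 by (simp only: open_openin)+
  have z0B: "z0 \<in> B" using z0 P0 unfolding B_def z0_def by auto
  show "\<exists>U. nhd0 U \<and> (\<forall>F z. finite F \<and> F \<subseteq> A \<longrightarrow>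
           (\<Sum>a\<in>F. zmult (z a) a) \<in> U \<longrightarrow> (\<forall>a\<in>F. zmult (z a) a \<in> W))"
  proof (intro exI conjI allI impI ballI)
    have "?K z0 \<in> ?K ` B" using z0B by (rule imageI)
    then have "?K z0 \<in> U" using U(2) by blast
    then have "0 \<in> U" using z0(2) by simp
    then show "nhd0 U" using U(1) unfolding nhd0_def by blast
    fix F z b
    assume F: "finite F \<and> F \<subseteq> A" and sU: "(\<Sum>a\<in>F. zmult (z a) a) \<in> U" and b: "b \<in> F"
    define g where "g = restrict (\<lambda>a. if a \<in> F then zmult (z a) a else 0) A"
    have "g \<in> (\<Pi>\<^sub>E c\<in>A. cyclic_subgroup c)"
      unfolding g_def by (auto simp: PiE_iff cyclic_iff intro: exI[of _ 0])
    moreover have "{a\<in>A. g a \<noteq> 0} \<subseteq> F" unfolding g_def by auto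
    moreover have "finite {a\<in>A. g a \<noteq> 0}" using F calculation(2) by (meson finite_subset)
    ultimately have gS: "g \<in> ?S" unfolding SA_carrier_def by blast
    have "?K g = sum g F" using F by (intro kalton_eq) (auto simp: g_def)
    also have "\<dots> = (\<Sum>a\<in>F. zmult (z a) a)" using F unfolding g_def
      by (intro sum.cong refl) (auto)
    finally have "?K g \<in> U" using sU by simp
    moreover have "?K g \<in> ?K ` ?S" using gS by (rule imageI)
    ultimately have "?K g \<in> U \<inter> ?K ` ?S" by (rule IntI)
    then have "?K g \<in> ?K ` B" using U(2) by simp
    then obtain h where h: "h \<in> B" "?K g = ?K h" by auto
    have "h \<in> ?S" using h unfolding B_def by auto
    then have "g = h" using inj_onD[OF inj h(2) gS] by simp
    then have gB: "g \<in> B" using h by simp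
    have bA: "b \<in> A" using F b by auto
    have gb: "g b \<in> cyclic_subgroup b" using gS bA by (auto simp: SA_carrier_def PiE_iff)
    define d where "d = restrict (\<lambda>c. if c = b then g b else 0) A"
    have d: "d \<in> ?S" "?K d = g b" using SA_single[OF gb bA] unfolding d_def by auto
    have "d \<in> B" unfolding B_def
    proof (intro CollectI conjI ballI)
      show "d \<in> ?S" by (fact d(1))
      fix a assume a: "a \<in> A"
      show "d a \<in> P a"
      proof (cases "a = b")
        case True then show ?thesis using gB a unfolding d_def B_def by auto
      next
        case False then show ?thesis using P0[OF a] a unfolding d_def by auto
      qed
    qed
    then have "g b \<in> V" using BV[OF \<open>d \<in> B\<close>] d(2) by simp
    moreover have "g b = zmult (z b) b" using b bA unfolding g_def by simp
    ultimately show "zmult (z b) b \<in> W" using V(3) by auto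
  qed
qed

theorem proposition4p7:
  fixes A :: "'a::{topological_ab_group_add, t2_space} set"
  assumes "0 \<notin> A"
  shows "(top_independent A \<longrightarrow>
            kalton A ` SA_carrier A = gen_subgroup A \<and>
            open_map (SA_top A) (subtopology euclidean (gen_subgroup A)) (kalton A))
       \<and> (embedding_map (SA_top A) euclidean (kalton A) \<longrightarrow> top_independent A)"
  using image_eq[of A] part1[of A] part2[OF assms] by blast


end
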